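(* Let $r,s\ge2$ be fixed integers such that either $s\ge5$ and $r>\rho(s)$, or $s\in\{2,3,4\}$ and $(r,s)\ne(2,2)$. Then: (a) Every local maximum of $\varphi$ on $K$ either equals $(0,0)$ or lies in the interior of $K$. (b) For every stationary point $(\alpha,\beta)$ of $\varphi$ in the interior of $K$, there exists $x\in(-1,\infty)$ such that $\alpha=\alpha(x)$, $\beta=\beta(x)$, and \[ (rs-r-s)\Big(1+\frac{x}{r-1}\Big)^{s-2}=(1+x)\Big(rs-r-s+sx+\frac{x(x+1)}{r-1}\Big).\tag{$\ast$} \] (c) Let $f:(-1,\infty)\to\mathbb R$ be defined by $f(x)=\varphi(\alpha(x),\beta(x))$. If $x\in(-1,\infty)$ is a stationary point of $f$, then $x$ satisfies $(\ast)$.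
   Context: Let $g(x)=x\log x$ for $x>0$, with $g(0)=0$. Let \[ K=\{(\alpha,\beta)\in\mathbb R^2:\alpha,\beta\ge0,\ (s-1)\alpha+\beta\le1\}. \] Define $\varphi:K\to\mathbb R$ by \begin{align*} \varphi(\alpha,\beta)&=(\alpha+\beta)\log(r-1)+g(\alpha+\beta)+g(r-1-\alpha-\beta)-\tfrac{2}{s-1}g(\beta)-g(\alpha)\\ &\quad-\tfrac{1}{s(s-1)}g(rs-r-s-s\beta)-\tfrac{1}{s-1}g(1-(s-1)\alpha-\beta). \end{align*} For $x\ge-1$, let \[ \alpha(x)=\frac{1+x}{rs-r+sx+\frac{x(x+1)}{r-1}},\qquad \beta(x)=\frac{rs-r-s}{rs-r+sx+\frac{x(x+1)}{r-1}}. \] For $s\ge5$, $\rho(s)$ is the unique real number in $(2,\infty)$ satisfying \[ (s-1)^{\rho}(\rho-1)^{s(\rho-1)}=\rho^{\rho s-\rho-s}(\rho s-\rho-s)^{(\rho s-\rho-s)/(s-1)}. \] *)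

theory Defs
  imports "HOL-Analysis.Analysis"
begin

text \<open>g(x) = x log x for x > 0, g(0) = 0. The paper only uses g on [0,oo);
  the value 0 for negative arguments is an irrelevant convention, since phi is only
  considered on its natural domain phi_dom below (where all arguments of g are >= 0).\<close>
definition gfun :: "real \<Rightarrow> real" where
  "gfun x = (if x > 0 then x * ln x else 0)"

definition Kset :: "nat \<Rightarrow> (real \<times> real) set" where
  "Kset s = {(a, b). a \<ge> 0 \<and> b \<ge> 0 \<and> (real s - 1) * a + b \<le> 1}"

definition phi :: "nat \<Rightarrow> nat \<Rightarrow> real \<times> real \<Rightarrow> real" where
  "phi r s p = (case p of (a, b) \<Rightarrow>
      (a + b) * ln (real r - 1) + gfun (a + b) + gfun (real r - 1 - a - b)
      - 2 / (real s - 1) * gfun b - gfun a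
      - 1 / (real s * (real s - 1)) * gfun (real r * real s - real r - real s - real s * b)
      - 1 / (real s - 1) * gfun (1 - (real s - 1) * a - b))"

text \<open>Natural domain of phi: the points of K where every argument of g is nonnegative.
  (On K all arguments except rs-r-s-s*beta are automatically nonnegative.)\<close>
definition phi_dom :: "nat \<Rightarrow> nat \<Rightarrow> (real \<times> real) set" where
  "phi_dom r s = {p \<in> Kset s. 0 \<le> real r * real s - real r - real s - real s * snd p}"

definition den_x :: "nat \<Rightarrow> nat \<Rightarrow> real \<Rightarrow> real" where
  "den_x r s x = real r * real s - real r + real s * x + x * (x + 1) / (real r - 1)"

definition alpha_x :: "nat \<Rightarrow> nat \<Rightarrow> real \<Rightarrow> real" where
  "alpha_x r s x = (1 + x) / den_x r s x"

definition beta_x :: "nat \<Rightarrow> nat \<Rightarrow> real \<Rightarrow> real" where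
  "beta_x r s x = (real r * real s - real r - real s) / den_x r s x"

definition star_eq :: "nat \<Rightarrow> nat \<Rightarrow> real \<Rightarrow> bool" where
  "star_eq r s x \<longleftrightarrow>
     (real r * real s - real r - real s) * (1 + x / (real r - 1)) ^ (s - 2)
     = (1 + x) * (real r * real s - real r - real s + real s * x + x * (x + 1) / (real r - 1))"

definition f_dom :: "nat \<Rightarrow> nat \<Rightarrow> real set" where
  "f_dom r s = {x. x > -1 \<and> (alpha_x r s x, beta_x r s x) \<in> phi_dom r s}"

definition rho :: "nat \<Rightarrow> real" where
  "rho s = (THE p. p > 2 \<and>
     (real s - 1) powr p * (p - 1) powr (real s * (p - 1))
     = p powr (p * real s - p - real s) * (p * real s - p - real s) powr ((p * real s - p - real s) / (real s - 1)))"

end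

theory Submission
  imports Defs "HOL-Real_Asymp.Real_Asymp"
begin


lemma gfun_at_right0: "(gfun \<longlongrightarrow> 0) (at_right 0)"
proof -
  have "((\<lambda>x::real. x * ln x) \<longlongrightarrow> 0) (at_right 0)" by real_asymp
  then show ?thesis
    by (rule filterlim_cong[THEN iffD1, rotated 3]) (auto simp: gfun_def eventually_at_right_field intro: exI[of _ 1])
qed

lemma gfun_at_left0: "(gfun \<longlongrightarrow> 0) (at_left 0)"
proof -
  have "((\<lambda>x::real. 0) \<longlongrightarrow> 0) (at_left 0)" by simp
  then show ?thesis
    by (rule filterlim_cong[THEN iffD1, rotated 3]) (auto simp: gfun_def eventually_at_left_field intro: exI[of _ "-1"])
qed

lemma gfun_deriv: assumes "x > 0" shows "(gfun has_real_derivative ln x + 1) (at x)"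
proof -
  have "((\<lambda>x. x * ln x) has_real_derivative ln x + 1) (at x)"
    using assms by (auto intro!: derivative_eq_intros)
  then show ?thesis
    by (rule has_field_derivative_transform_within_open[of _ _ _ "{0<..}"]) (use assms in \<open>auto simp: gfun_def\<close>)
qed

lemma isCont_gfun: "isCont gfun x"
proof -
  consider "x > 0" | "x < 0" | "x = 0" by linarith
  then show ?thesis
  proof cases
    case 1
    then show ?thesis using gfun_deriv DERIV_isCont by blast
  next
    case 2
    have "((\<lambda>x. 0) has_real_derivative 0) (at x)" by simp
    then have "(gfun has_real_derivative 0) (at x)"
      by (rule has_field_derivative_transform_within_open[of _ _ _ "{..<0}"]) (use 2 in \<open>auto simp: gfun_def\<close>)
    then show ?thesis by (rule DERIV_isCont)
  next
    case 3
    have "gfun 0 = 0" by (simp add: gfun_def)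
    then show ?thesis using 3 gfun_at_left0 gfun_at_right0
      by (simp add: isCont_def filterlim_split_at)
  qed
qed

lemma continuous_on_gfun[continuous_intros]:
  assumes "continuous_on A f" shows "continuous_on A (\<lambda>x. gfun (f x))"
proof -
  have "continuous_on UNIV gfun" by (simp add: continuous_at_imp_continuous_on isCont_gfun)
  then show ?thesis by (rule continuous_on_compose2[OF _ assms]) simp
qed

lemma gfun_chain:
  assumes df: "(f has_real_derivative f') (at x within S)" and pos: "f x > 0"
  shows "((\<lambda>x. gfun (f x)) has_real_derivative (ln (f x) + 1) * f') (at x within S)"
  by (rule DERIV_chain2[OF gfun_deriv[OF pos] df])

lemma gfun_chain_eq:
  assumes "(f has_real_derivative f') (at x within S)" "f x > 0" "D = (ln (f x) + 1) * f'"
  shows "((\<lambda>x. gfun (f x)) has_real_derivative D) (at x within S)"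
  using gfun_chain[OF assms(1,2)] assms(3) by simp



lemma curve_alg:
  fixes S A' B' L0 L1 L2 L3 L4 L5 L6 :: real
  assumes "S > 1"
  shows "(A'+B')*L0 + (L1+1)*(A'+B') + (L2+1)*(0-A'-B') - 2/(S-1)*((L3+1)*B') - (L4+1)*A'
     - 1/(S*(S-1))*((L5+1)*(0-S*B')) - 1/(S-1)*((L6+1)*(0-(S-1)*A' - B'))
   = (L0+L1-L2-L4+L6)*A' + (L0+L1-L2 + (L5+L6-2*L3)/(S-1))*B'"
proof -
  have S0: "S \<noteq> 0" "S - 1 \<noteq> 0" using assms by auto
  have e1: "1/(S*(S-1))*((L5+1)*(0-S*B')) = -(((L5+1)*B')/(S-1))" using S0 by (simp add: field_simps)
  have e2: "1/(S-1)*((L6+1)*(0-(S-1)*A' - B')) = -((L6+1)*A') - (L6+1)*B'/(S-1)" using S0 by (simp add: field_simps)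
  have e3: "(L5+L6-2*L3)/(S-1)*B' = ((L5+1)*B')/(S-1) + ((L6+1)*B')/(S-1) - (2*((L3+1)*B'))/(S-1)"
  proof -
    have "(L5+L6-2*L3)*B' = (L5+1)*B' + (L6+1)*B' - 2*((L3+1)*B')" by (simp add: algebra_simps)
    then have "(L5+L6-2*L3)/(S-1)*B' = ((L5+1)*B' + (L6+1)*B' - 2*((L3+1)*B'))/(S-1)" by simp
    then show ?thesis by (simp only: add_divide_distrib diff_divide_distrib)
  qed
  have e4: "2/(S-1)*((L3+1)*B') = (2*((L3+1)*B'))/(S-1)" by simp
  show ?thesis unfolding e1 e2 e4 distrib_right[of _ _ B'] e3 by (simp add: algebra_simps)
qed
lemma curve_raw:
  assumes dA: "(A has_real_derivative A') (at x)" and dB: "(B has_real_derivative B') (at x)"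
  and pos: "A x > 0" "B x > 0" "real r - 1 - A x - B x > 0"
     "real r*real s - real r - real s - real s * B x > 0" "1 - (real s - 1)*A x - B x > 0"
  shows "((\<lambda>y. phi r s (A y, B y)) has_real_derivative
     (A'+B')*ln(real r-1) + (ln(A x + B x)+1)*(A'+B') + (ln(real r-1-A x-B x)+1)*(0-A'-B') 
     - 2/(real s-1)*((ln (B x)+1)*B') - (ln(A x)+1)*A' 
     - 1/(real s*(real s-1))*((ln(real r*real s - real r - real s - real s * B x)+1)*(0-real s*B'))
     - 1/(real s-1)*((ln(1 - (real s - 1)*A x - B x)+1)*(0-(real s-1)*A' - B'))) (at x)"
proof -
  have d1: "((\<lambda>y. A y + B y) has_real_derivative A' + B') (at x)" by (rule DERIV_add[OF dA dB])
  have d2: "((\<lambda>y. real r - 1 - A y - B y) has_real_derivative 0 - A' - B') (at x)"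
    by (intro DERIV_diff DERIV_const dA dB)
  have d3: "((\<lambda>y. real r*real s - real r - real s - real s * B y) has_real_derivative 0 - real s*B') (at x)"
    by (intro DERIV_diff DERIV_const DERIV_cmult dB)
  have d4: "((\<lambda>y. 1 - (real s - 1)*A y - B y) has_real_derivative 0-(real s-1)*A' - B') (at x)"
    by (intro DERIV_diff DERIV_const DERIV_cmult dA dB)
  have g1: "((\<lambda>y. gfun (A y + B y)) has_real_derivative (ln(A x + B x)+1)*(A'+B')) (at x)"
    by (rule gfun_chain_eq[OF d1]) (use pos in auto)
  have g2: "((\<lambda>y. gfun (real r - 1 - A y - B y)) has_real_derivative (ln(real r-1-A x-B x)+1)*(0-A'-B')) (at x)"
    by (rule gfun_chain_eq[OF d2]) (use pos in auto)
  have g3: "((\<lambda>y. gfun (B y)) has_real_derivative (ln (B x)+1)*B') (at x)"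
    by (rule gfun_chain_eq[OF dB]) (use pos in auto)
  have g4: "((\<lambda>y. gfun (A y)) has_real_derivative (ln (A x)+1)*A') (at x)"
    by (rule gfun_chain_eq[OF dA]) (use pos in auto)
  have g5: "((\<lambda>y. gfun (real r*real s - real r - real s - real s * B y)) has_real_derivative
      (ln(real r*real s - real r - real s - real s * B x)+1)*(0-real s*B')) (at x)"
    by (rule gfun_chain_eq[OF d3]) (use pos in auto)
  have g6: "((\<lambda>y. gfun (1 - (real s - 1)*A y - B y)) has_real_derivative
      (ln(1 - (real s - 1)*A x - B x)+1)*(0-(real s-1)*A' - B')) (at x)"
    by (rule gfun_chain_eq[OF d4]) (use pos in auto)
  show ?thesis unfolding phi_def prod.case
    by (intro DERIV_diff DERIV_add DERIV_cmult DERIV_cmult_right g1 g2 g3 g4 g5 g6 d1)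
qed

lemma gfun_lin:
  assumes f: "\<And>y. f y = p + q*y" and c: "q = 0 \<or> f t > 0"
  shows "((\<lambda>y. gfun (f y)) has_real_derivative (ln (f t) + 1)*q) (at t)"
proof (cases "q = 0")
  case True then show ?thesis using f by simp
next
  case False
  then have fp: "f t > 0" using c by auto
  have df: "(f has_real_derivative q) (at t)"
    unfolding f[abs_def] by (auto intro!: derivative_eq_intros)
  show ?thesis by (rule gfun_chain_eq[OF df fp refl])
qed

lemma line_raw:
  fixes a0 b0 da db t :: real
  defines "a \<equiv> a0 + t*da" and "b \<equiv> b0 + t*db"
  assumes c1: "da + db = 0 \<or> a + b > 0" and c2: "da + db = 0 \<or> real r - 1 - a - b > 0"
    and c3: "db = 0 \<or> b > 0" and c4: "da = 0 \<or> a > 0"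
    and c5: "db = 0 \<or> real r*real s - real r - real s - real s * b > 0"
    and c6: "(real s - 1)*da + db = 0 \<or> 1 - (real s - 1)*a - b > 0"
  shows "((\<lambda>y. phi r s (a0 + y*da, b0 + y*db)) has_real_derivative
     (da+db)*ln(real r-1) + (ln(a + b)+1)*(da+db) + (ln(real r-1-a-b)+1)*(0-da-db) 
     - 2/(real s-1)*((ln b+1)*db) - (ln a+1)*da 
     - 1/(real s*(real s-1))*((ln(real r*real s - real r - real s - real s * b)+1)*(0-real s*db))
     - 1/(real s-1)*((ln(1 - (real s - 1)*a - b)+1)*(0-(real s-1)*da - db))) (at t)"
proof -
  have d1: "((\<lambda>y. a0 + y*da + (b0 + y*db)) has_real_derivative da+db) (at t)"
    by (auto intro!: derivative_eq_intros)
  have g1: "((\<lambda>y. gfun (a0 + y*da + (b0 + y*db))) has_real_derivative (ln(a+b)+1)*(da+db)) (at t)"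
    unfolding a_def b_def by (rule gfun_lin[where p="a0+b0"]) (use c1 in \<open>auto simp: a_def b_def algebra_simps\<close>)
  have g2: "((\<lambda>y. gfun (real r - 1 - (a0 + y*da) - (b0 + y*db))) has_real_derivative (ln(real r-1-a-b)+1)*(0-da-db)) (at t)"
    unfolding a_def b_def by (rule gfun_lin[where p="real r - 1 - a0 - b0"]) (use c2 in \<open>auto simp: a_def b_def algebra_simps\<close>)
  have g3: "((\<lambda>y. gfun (b0 + y*db)) has_real_derivative (ln b+1)*db) (at t)"
    unfolding a_def b_def by (rule gfun_lin[where p="b0"]) (use c3 in \<open>auto simp: a_def b_def algebra_simps\<close>)
  have g4: "((\<lambda>y. gfun (a0 + y*da)) has_real_derivative (ln a+1)*da) (at t)"
    unfolding a_def b_def by (rule gfun_lin[where p="a0"]) (use c4 in \<open>auto simp: a_def b_def algebra_simps\<close>)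
  have g5: "((\<lambda>y. gfun (real r*real s - real r - real s - real s * (b0 + y*db))) has_real_derivative
       (ln(real r*real s - real r - real s - real s * b)+1)*(0-real s*db)) (at t)"
    unfolding a_def b_def by (rule gfun_lin[where p="real r*real s - real r - real s - real s * b0"]) (use c5 in \<open>auto simp: a_def b_def algebra_simps\<close>)
  have g6: "((\<lambda>y. gfun (1 - (real s - 1)*(a0 + y*da) - (b0 + y*db))) has_real_derivative
       (ln(1 - (real s - 1)*a - b)+1)*(0-(real s-1)*da - db)) (at t)"
    unfolding a_def b_def by (rule gfun_lin[where p="1 - (real s - 1)*a0 - b0"]) (use c6 in \<open>auto simp: a_def b_def algebra_simps\<close>)
  show ?thesis unfolding phi_def prod.case
    by (intro DERIV_diff DERIV_add DERIV_cmult DERIV_cmult_right g1 g2 g3 g4 g5 g6 d1)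
qed

definition pa :: "nat \<Rightarrow> nat \<Rightarrow> real \<Rightarrow> real \<Rightarrow> real" where
  "pa r s a b = ln (real r - 1) + ln (a + b) - ln (real r - 1 - a - b) - ln a + ln (1 - (real s - 1)*a - b)"

definition pb :: "nat \<Rightarrow> nat \<Rightarrow> real \<Rightarrow> real \<Rightarrow> real" where
  "pb r s a b = ln (real r - 1) + ln (a + b) - ln (real r - 1 - a - b)
     + (ln (real r * real s - real r - real s - real s * b) + ln (1 - (real s - 1)*a - b) - 2 * ln b) / (real s - 1)"

lemma phi_curve_deriv:
  assumes dA: "(A has_real_derivative A') (at x)" and dB: "(B has_real_derivative B') (at x)"
  and pos: "A x > 0" "B x > 0" "real r - 1 - A x - B x > 0"
     "real r*real s - real r - real s - real s * B x > 0" "1 - (real s - 1)*A x - B x > 0"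
  and s: "s \<ge> 2"
  shows "((\<lambda>y. phi r s (A y, B y)) has_real_derivative pa r s (A x) (B x) * A' + pb r s (A x) (B x) * B') (at x)"
proof -
  have S1: "real s > 1" using s by simp
  note eq = curve_alg[OF S1, of A' B' "ln (real r - 1)" "ln (A x + B x)" "ln (real r - 1 - A x - B x)"
     "ln (B x)" "ln (A x)" "ln (real r*real s - real r - real s - real s * B x)" "ln (1 - (real s - 1)*A x - B x)"]
  show ?thesis unfolding pa_def pb_def using curve_raw[OF dA dB pos, unfolded eq] .
qed

lemma phi_line_deriv:
  fixes a0 b0 da db t :: real
  assumes c1: "da + db = 0 \<or> a0 + t*da + (b0 + t*db) > 0" and c2: "da + db = 0 \<or> real r - 1 - (a0 + t*da) - (b0 + t*db) > 0"
    and c3: "db = 0 \<or> b0 + t*db > 0" and c4: "da = 0 \<or> a0 + t*da > 0"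
    and c5: "db = 0 \<or> real r*real s - real r - real s - real s * (b0 + t*db) > 0"
    and c6: "(real s - 1)*da + db = 0 \<or> 1 - (real s - 1)*(a0 + t*da) - (b0 + t*db) > 0"
    and s: "s \<ge> 2"
  shows "((\<lambda>y. phi r s (a0 + y*da, b0 + y*db)) has_real_derivative
     pa r s (a0 + t*da) (b0 + t*db) * da + pb r s (a0 + t*da) (b0 + t*db) * db) (at t)"
proof -
  have S1: "real s > 1" using s by simp
  note eq = curve_alg[OF S1, of da db "ln (real r - 1)" "ln (a0 + t*da + (b0 + t*db))" "ln (real r - 1 - (a0 + t*da) - (b0 + t*db))"
     "ln (b0 + t*db)" "ln (a0 + t*da)" "ln (real r*real s - real r - real s - real s * (b0 + t*db))"
     "ln (1 - (real s - 1)*(a0 + t*da) - (b0 + t*db))"]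
  have "((\<lambda>y. phi r s (a0 + y*da, b0 + y*db)) has_real_derivative
     pa r s (a0 + t*da) (b0 + t*db) * da + pb r s (a0 + t*da) (b0 + t*db) * db) (at t)"
    unfolding pa_def pb_def using line_raw[OF c1 c2 c3 c4 c5 c6, unfolded eq] .
  then show ?thesis .
qed



lemma den_pos:
  assumes r: "r \<ge> 2" and s: "s \<ge> 2" and N: "real r*real s - real r - real s > 0" and x: "x > -1"
  shows "den_x r s x > 0"
proof -
  have R: "real r - 1 \<ge> 1" using r by auto
  have "x/(real r - 1) > -1" using R x by (simp add: field_simps)
  then have "real s + x/(real r - 1) > 0" using s by linarith
  then have "(x+1)*(real s + x/(real r - 1)) > 0" using x by simp
  moreover have "den_x r s x = (real r*real s - real r - real s) + (x+1)*(real s + x/(real r - 1))"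
    unfolding den_x_def using R by (simp add: field_simps)
  ultimately show ?thesis using N by linarith
qed

lemma curve_props:
  assumes r: "r \<ge> 2" and s: "s \<ge> 2" and N: "real r*real s - real r - real s > 0" and x: "x > -1"
  defines "a \<equiv> alpha_x r s x" and "b \<equiv> beta_x r s x" and "D \<equiv> den_x r s x"
  shows "a > 0" "b > 0" "1 - (real s - 1)*a - b = a*(1 + x/(real r - 1))"
    "1 - (real s - 1)*a - b > 0"
    "real r*real s - real r - real s - real s*b = b*(D - real s)"
    "(real r - 1)*(a+b)*(1 - (real s - 1)*a - b) = a*(real r - 1 - a - b)"
    "real r - 1 - a - b > 0"
    "(real r*real s - real r - real s)*a/b - 1 = x"
proof -
  have D: "D > 0" unfolding D_def using den_pos assms by blast
  have R: "real r - 1 \<ge> 1" using r by auto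
  show a: "a > 0" unfolding a_def alpha_x_def using D x D_def by simp
  show b: "b > 0" unfolding b_def beta_x_def using D N D_def by simp
  have c: "1 + x/(real r - 1) > 0" using R x by (simp add: field_simps)
  have R0: "real r - 1 > 0" using R by simp
  have Da: "a = (1+x)/D" and Db: "b = (real r*real s - real r - real s)/D"
    unfolding a_def b_def alpha_x_def beta_x_def D_def by simp_all
  have Dc: "D - (real s - 1)*(1+x) - (real r*real s - real r - real s) = (1+x)*(1 + x/(real r - 1))"
    unfolding D_def den_x_def using R0 by (simp add: field_simps)
  show w: "1 - (real s - 1)*a - b = a*(1 + x/(real r - 1))"
  proof -
    have "1 - (real s - 1)*a - b = (D - (real s - 1)*(1+x) - (real r*real s - real r - real s))/D"
      unfolding Da Db using D by (simp add: field_simps)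
    also have "... = a*(1 + x/(real r - 1))" unfolding Dc Da by simp
    finally show ?thesis .
  qed
  show "1 - (real s - 1)*a - b > 0" unfolding w using a c by simp
  show "real r*real s - real r - real s - real s*b = b*(D - real s)"
    unfolding Db using D by (simp add: field_simps)
  have Dk: "(1+x+(real r*real s - real r - real s))*(real r + x) = (real r - 1)*D"
    unfolding D_def den_x_def using R0 by (simp add: field_simps)
  have ab: "(a+b)*(real r + x) = real r - 1"
  proof -
    have "(a+b)*(real r + x) = (1+x+(real r*real s - real r - real s))*(real r + x)/D"
      unfolding Da Db using D by (simp add: field_simps)
    then show ?thesis unfolding Dk using D by simp
  qed
  show h1: "(real r - 1)*(a+b)*(1 - (real s - 1)*a - b) = a*(real r - 1 - a - b)"
  proof -
    have "(real r - 1)*(1 + x/(real r - 1)) = real r - 1 + x" using R0 by (simp add: field_simps)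
    then have "(real r - 1)*(a+b)*(1 - (real s - 1)*a - b) = a*((a+b)*(real r - 1 + x))"
      unfolding w by (metis mult.assoc mult.commute)
    also have "(a+b)*(real r - 1 + x) = real r - 1 - a - b" using ab by (simp add: algebra_simps)
    finally show ?thesis .
  qed
  have "(real r - 1)*(a+b)*(1 - (real s - 1)*a - b) > 0"
    using a b c R by (simp add: w)
  then show "real r - 1 - a - b > 0" using h1 a by (simp add: zero_less_mult_iff)
  have Nn: "real r*real s - real r - real s \<noteq> 0" using N by simp
  have gen: "\<And>M::real. M \<noteq> 0 \<Longrightarrow> M*((1+x)/D)/(M/D) = 1 + x" using D by (simp add: field_simps)
  show "(real r*real s - real r - real s)*a/b - 1 = x"
    using gen[OF Nn] unfolding Da Db by simp
qed

lemma star_from_prod: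
  assumes r: "r \<ge> 2" and s: "s \<ge> 2" and N: "real r*real s - real r - real s > 0" and x: "x > -1"
  defines "a \<equiv> alpha_x r s x" and "b \<equiv> beta_x r s x"
  assumes h2: "a^(s-1) * (real r*real s - real r - real s - real s*b) = b^2 * (1 - (real s - 1)*a - b)^(s-2)"
  shows "star_eq r s x"
proof -
  define D where "D = den_x r s x"
  define c where "c = 1 + x/(real r - 1)"
  have D: "D > 0" unfolding D_def using den_pos assms by blast
  note cp = curve_props[OF r s N x, folded a_def b_def D_def]
  have sk: "s - 1 = Suc (s-2)" using s by auto
  have w: "1 - (real s - 1)*a - b = a*c" using cp(3) unfolding c_def .
  from h2 have "a^(s-1) * (b*(D - real s)) = b^2 * (a*c)^(s-2)" by (simp only: cp(5) w)
  then have "a^(s-2) * (a*(b*(D - real s))) = a^(s-2) * (b*(b * c^(s-2)))"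
    by (simp only: sk power_Suc power_mult_distrib power2_eq_square mult_ac)
  then have "a*(b*(D - real s)) = b*(b * c^(s-2))" using cp(1) by simp
  then have "a*(D - real s) = b * c^(s-2)" using cp(2) by (simp add: mult.left_commute)
  moreover have "(1+x)*(D - real s) = D*(a*(D - real s))"
    unfolding a_def alpha_x_def D_def[symmetric] using D by simp
  moreover have Dbn: "D*b = real r*real s - real r - real s"
    unfolding b_def beta_x_def D_def[symmetric] using D by simp
  moreover have "(real r*real s - real r - real s) * c^(s-2) = D*(b * c^(s-2))"
    by (simp add: Dbn[symmetric] mult.assoc)
  ultimately have "(1+x)*(D - real s) = (real r*real s - real r - real s) * c^(s-2)" by simp
  then show ?thesis unfolding star_eq_def c_def D_def den_x_def by (simp add: algebra_simps)
qed

lemma param_from_eq1: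
  assumes r: "r \<ge> 2" and s: "s \<ge> 2" and N: "real r*real s - real r - real s > 0"
    and a: "a > 0" and b: "b > 0"
    and h1: "(real r - 1)*(a+b)*(1 - (real s - 1)*a - b) = a*(real r - 1 - a - b)"
  defines "x \<equiv> (real r*real s - real r - real s)*a/b - 1"
  shows "x > -1" "a = alpha_x r s x" "b = beta_x r s x"
proof -
  define N' where "N' = real r*real s - real r - real s"
  have R: "real r - 1 \<ge> 1" using r by auto
  show "x > -1" unfolding x_def using N a b by simp
  have key: "b*(real r - 1)*(1-b-real s*a) = a*(N'*a-b)"
    using h1 unfolding N'_def by (simp add: algebra_simps)
  have x1: "x + 1 = N'*a/b" unfolding x_def N'_def by simp
  have Dx: "den_x r s x = N' + real s*(x+1) + x*(x+1)/(real r - 1)"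
    unfolding den_x_def N'_def by (simp add: algebra_simps)
  have xa: "x*(N'*a) = N'*((real r - 1)*(1-b-real s*a))"
  proof -
    have "x*(N'*a) = N'*(a*(N'*a - b))/b" unfolding x_def N'_def[symmetric] using b
      by (simp add: field_simps)
    also have "... = N'*((real r - 1)*(1-b-real s*a))" unfolding key[symmetric] using b by simp
    finally show ?thesis .
  qed
  have Db: "den_x r s x * b = N'"
  proof -
    have "den_x r s x * b = N'*b + real s*((x+1)*b) + x*((x+1)*b)/(real r - 1)"
      unfolding Dx by (simp add: algebra_simps)
    also have "(x+1)*b = N'*a" unfolding x1 using b by simp
    finally have "den_x r s x * b = N'*b + real s*N'*a + x*(N'*a)/(real r - 1)" by simp
    also have "... = N'" unfolding xa using R by (simp add: field_simps)
    finally show ?thesis .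
  qed
  then have D0: "den_x r s x \<noteq> 0" using N N'_def by auto
  show "b = beta_x r s x" unfolding beta_x_def using Db D0 N'_def by (simp add: field_simps)
  have N'p: "N' > 0" using N N'_def by simp
  show "a = alpha_x r s x" unfolding alpha_x_def using Db D0 b N'p unfolding x_def N'_def[symmetric]
    by (simp add: field_simps)
qed



lemma phi_line_cont: "continuous_on A (\<lambda>t. phi r s (a0 + t*da, b0 + t*db))"
  unfolding phi_def prod.case by (intro continuous_intros)

lemma incr_lemma:
  fixes h :: "real \<Rightarrow> real"
  assumes T: "T > 0" and c: "continuous_on {0..T} h"
    and d: "\<And>t. 0 < t \<Longrightarrow> t < T \<Longrightarrow> (h has_real_derivative E t) (at t) \<and> E t > 0"
  shows "h 0 < h T"
  using DERIV_pos_imp_increasing_open[OF T _ c] d by blast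

lemma pa_eq:
  assumes "a > 0" "a + b > 0" "real r - 1 - a - b > 0" "1 - (real s - 1)*a - b > 0" "r \<ge> 2"
  shows "pa r s a b = ln ((real r - 1)*(a+b)*(1 - (real s - 1)*a - b)) - ln (a*(real r - 1 - a - b))"
  using assms unfolding pa_def by (simp add: ln_mult)

lemma pb_mul:
  assumes "s \<ge> 2"
  shows "pb r s a b * (real s - 1) = (ln (real r - 1) + ln (a + b) - ln (real r - 1 - a - b))*(real s - 1)
     + (ln (real r * real s - real r - real s - real s * b) + ln (1 - (real s - 1)*a - b) - 2 * ln b)"
  using assms unfolding pb_def by (simp add: field_simps)

lemma A_ge:
  assumes "a > 0" "b \<ge> 0" "real r - 1 - a - b > 0"
  shows "ln (real r - 1) + ln (a+b) - ln (real r - 1 - a - b) \<ge> ln a"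
proof -
  have R: "real r - 1 > 0" using assms by linarith
  have "(real r - 1 - a - b)*a \<le> (real r - 1)*(a+b)"
    using assms by (intro mult_mono) auto
  then have "ln ((real r - 1 - a - b)*a) \<le> ln ((real r - 1)*(a+b))"
    using assms R by (subst ln_le_cancel_iff) auto
  then show ?thesis using assms R by (simp add: ln_mult)
qed

lemma dist_line: fixes a0 b0 t da db :: real shows "dist (a0 + t*da, b0 + t*db) (a0, b0) \<le> \<bar>t\<bar>*(\<bar>da\<bar> + \<bar>db\<bar>)"
proof -
  have "dist (a0 + t*da, b0 + t*db) (a0, b0) = norm (t*da, t*db)"
    by (simp add: dist_norm)
  also have "... \<le> norm (t*da) + norm (t*db)" by (rule norm_Pair_le)
  finally show ?thesis by (simp add: abs_mult algebra_simps)
qed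

lemma ln_lt_of_exp: fixes t c :: real assumes "0 < t" "t < exp c" shows "ln t < c"
proof -
  have "ln t < ln (exp c)" using assms by (subst ln_less_cancel_iff) auto
  then show ?thesis by simp
qed

lemma case_a0:
  assumes r: "r \<ge> 2" and s: "s \<ge> 2" and b: "0 < b" "b < 1"
    and u: "0 \<le> real r*real s - real r - real s - real s*b" and e: "e > 0"
  shows "\<exists>q\<in>phi_dom r s. dist q (0,b) < e \<and> phi r s q > phi r s (0,b)"
proof -
  define S where "S = real s"
  define R where "R = real r"
  define c where "c = 1 - b"
  have cp: "c > 0" using b c_def by simp
  have S1: "S - 1 \<ge> 1" using s S_def by auto
  have R1: "R - 1 \<ge> 1" using r R_def by auto
  define T where "T = min (e/2) (min (c/(2*(S-1))) (b*c/4))"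
  have Tp: "T > 0" unfolding T_def using e b cp S1 by auto
  have T1: "T \<le> c/(2*(S-1))" "T \<le> b*c/4" "T < e" unfolding T_def using e
    by (metis min.cobounded1 min.cobounded2 order.trans, metis min.cobounded1 min.cobounded2 order.trans,
        smt (verit) field_sum_of_halves min.cobounded1)
  have ST: "(S-1)*T \<le> c/2" using T1(1) S1 by (simp add: field_simps)
  let ?h = "\<lambda>t. phi r s (0 + t*1, b + t*0)"
  have "?h 0 < ?h T"
  proof (rule incr_lemma[OF Tp phi_line_cont])
    fix t assume t: "0 < t" "t < T"
    define y where "y = (S-1)*t"
    have "(S-1)*t \<le> (S-1)*T" using t S1 by simp
    then have St: "y \<le> c/2" using ST unfolding y_def by linarith
    have tw: "t \<le> y" using S1 t unfolding y_def by simp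
    have m: "R - 1 - t - b > 0" using St tw b R1 cp c_def by linarith
    have w: "1 - (S-1)*t - b \<ge> c/2" using St c_def unfolding y_def[symmetric] by linarith
    have "(?h has_real_derivative pa r s (0 + t*1) (b + t*0) * 1 + pb r s (0 + t*1) (b + t*0) * 0) (at t)"
      by (rule phi_line_deriv) (use t b m w cp s in \<open>auto simp: R_def S_def\<close>)
    moreover have "pa r s t b > 0"
    proof -
      have "t*(R-1-t-b) \<le> t*(R-1)" using t b by (intro mult_left_mono) auto
      also have "... < (b*c/4)*(R-1)" using t T1(2) R1 by (intro mult_strict_right_mono) auto
      also have "... < (R-1)*b*(c/2)" using b cp R1 by (simp add: field_simps)
      also have "... \<le> (R-1)*(t+b)*(1 - (S-1)*t - b)"
        using w b t R1 cp by (intro mult_mono) auto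
      finally have ineq: "t*(R-1-t-b) < (R-1)*(t+b)*(1 - (S-1)*t - b)" .
      have wpos: "1 - (S-1)*t - b > 0" using w cp by linarith
      have eq: "pa r s t b = ln ((R-1)*(t+b)*(1 - (S-1)*t - b)) - ln (t*(R-1-t-b))"
        using pa_eq[of t b r s] t b m wpos r unfolding R_def S_def by simp
      have "ln (t*(R-1-t-b)) < ln ((R-1)*(t+b)*(1 - (S-1)*t - b))"
        using ineq t m b R1 wpos by simp
      then show ?thesis unfolding eq by simp
    qed
    ultimately show "(?h has_real_derivative pa r s t b) (at t) \<and> pa r s t b > 0" by simp
  qed
  then have "phi r s (0,b) < phi r s (T,b)" by simp
  moreover have "(T,b) \<in> phi_dom r s"
  proof -
    have "(S-1)*T + b \<le> 1" using ST cp c_def by linarith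
    then show ?thesis
      unfolding phi_dom_def Kset_def using Tp b u unfolding S_def by auto
  qed
  moreover have "dist (T,b) (0,b) < e" using T1 Tp by (simp add: dist_Pair_Pair)
  ultimately show ?thesis by blast
qed

lemma case_b0:
  assumes r: "r \<ge> 2" and s: "s \<ge> 2" and a: "0 < a" and w0: "1 - (real s - 1)*a > 0"
    and N: "real r*real s - real r - real s > 0" and e: "e > 0"
  shows "\<exists>q\<in>phi_dom r s. dist q (a,0) < e \<and> phi r s q > phi r s (a,0)"
proof -
  define S where "S = real s"
  define R where "R = real r"
  define N where "N = R*S - R - S"
  define w0 where "w0 = 1 - (S-1)*a"
  have S1: "S - 1 \<ge> 1" using s S_def by auto
  have R1: "R - 1 \<ge> 1" using r R_def by auto
  have Np: "N > 0" using N unfolding N_def R_def S_def .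
  have w0p: "w0 > 0" using w0 unfolding w0_def S_def .
  define C0 where "C0 = ((S-1)*ln a + ln(N/2) + ln(w0/2))/2"
  define T where "T = min (e/2) (min (N/(2*S)) (min (w0/2) (exp C0)))"
  have Tp: "T > 0" unfolding T_def using e Np w0p S1 by auto
  have T1: "T < e" "T \<le> N/(2*S)" "T \<le> w0/2" "T \<le> exp C0" unfolding T_def using e by auto
  let ?h = "\<lambda>t. phi r s (a + t*0, 0 + t*1)"
  have "?h 0 < ?h T"
  proof (rule incr_lemma[OF Tp phi_line_cont])
    fix t assume t: "0 < t" "t < T"
    have "S*t < S*T" using t S1 by simp
    also have "S*T \<le> N/2" using T1(2) S1 by (simp add: field_simps)
    finally have u: "N - S*t > N/2" by simp
    have w: "1 - (S-1)*a - t > w0/2" using t T1(3) w0_def by linarith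
    have aa: "a \<le> (S-1)*a" using S1 a by simp
    have m: "R - 1 - a - t > 0" using w aa w0p R1 t by linarith
    have "(?h has_real_derivative pa r s (a + t*0) (0 + t*1) * 0 + pb r s (a + t*0) (0 + t*1) * 1) (at t)"
      by (rule phi_line_deriv) (use t a m w u w0p Np s in \<open>auto simp: R_def S_def N_def\<close>)
    moreover have "pb r s a t > 0"
    proof -
      have A: "ln (R - 1) + ln (a+t) - ln (R - 1 - a - t) \<ge> ln a"
        using A_ge[of a t r] a t m unfolding R_def by simp
      have lu: "ln (N - S*t) > ln (N/2)" using u Np by simp
      have lw: "ln (1 - (S-1)*a - t) > ln (w0/2)" using w w0p by simp
      have lt: "ln t < C0" using t T1(4) ln_lt_of_exp[of t C0] by simp
      have "(S-1)*ln a + ln (N - S*t) + ln (1 - (S-1)*a - t) - 2*ln t > 0"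
        using lu lw lt unfolding C0_def by simp
      moreover have "(S-1)*(ln (R - 1) + ln (a+t) - ln (R - 1 - a - t)) \<ge> (S-1)*ln a"
        using A S1 by simp
      ultimately have "pb r s a t * (S-1) > 0"
        using pb_mul[OF s, of r a t] unfolding R_def[symmetric] S_def[symmetric] N_def[symmetric]
        by (simp add: algebra_simps)
      then show ?thesis using S1 by (simp add: zero_less_mult_iff)
    qed
    ultimately show "(?h has_real_derivative pb r s a t) (at t) \<and> pb r s a t > 0" by simp
  qed
  then have "phi r s (a,0) < phi r s (a,T)" by simp
  moreover have "(a,T) \<in> phi_dom r s"
  proof -
    have h1: "S*T \<le> N/2" using T1(2) S1 by (simp add: field_simps)
    have h2: "(S-1)*a + T \<le> 1" using T1(3) w0_def w0p by linarith
    have h3: "N = real r * real s - real r - real s" by (simp add: N_def R_def S_def)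
    have h4: "0 \<le> real r * real s - real r - real s - real s * T" using h1 h3 Np unfolding S_def by linarith
    show ?thesis unfolding phi_dom_def Kset_def using Tp a h2 h4 unfolding S_def by auto
  qed
  moreover have "dist (a,T) (a,0) < e" using T1 Tp by (simp add: dist_Pair_Pair)
  ultimately show ?thesis by blast
qed

lemma case_w0:
  assumes r: "r \<ge> 2" and s: "s \<ge> 2" and a: "0 < a" and b: "0 < b"
    and w: "1 - (real s - 1)*a - b = 0"
    and u: "0 \<le> real r*real s - real r - real s - real s*b" and nt: "\<not> (r = 2 \<and> s = 2)" and e: "e > 0"
  shows "\<exists>q\<in>phi_dom r s. dist q (a,b) < e \<and> phi r s q > phi r s (a,b)"
proof -
  define S where "S = real s"
  define R where "R = real r"
  have S1: "S - 1 \<ge> 1" using s S_def by auto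
  have R1: "R - 1 \<ge> 1" using r R_def by auto
  define m where "m = R - 1 - a - b"
  have m_eq: "m = (R - 2) + (S - 2)*a" using w unfolding m_def S_def by (simp add: algebra_simps)
  have mp: "m > 0"
  proof (cases "r \<ge> 3")
    case True
    then have "R - 2 \<ge> 1" unfolding R_def by simp
    moreover have "(S-2)*a \<ge> 0" using s a unfolding S_def by simp
    ultimately show ?thesis using m_eq by linarith
  next
    case False
    then have "r = 2" using r by simp
    then have "s \<ge> 3" using nt s by simp
    then have "(S-2)*a > 0" using a unfolding S_def by simp
    moreover have "R - 2 = 0" using \<open>r = 2\<close> unfolding R_def by simp
    ultimately show ?thesis using m_eq by linarith
  qed
  define K where "K = (R-1)*(a+b)*(S-1)"
  have Kp: "K > 0" unfolding K_def using R1 S1 a b by simp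
  define T where "T = min (e/2) (min (a/2) (a*m/(4*K)))"
  have Tp: "T > 0" unfolding T_def using e a mp Kp by auto
  have T1: "T < e" "T \<le> a/2" "T \<le> a*m/(4*K)" unfolding T_def using e by auto
  let ?h = "\<lambda>t. phi r s (a + t*(-1), b + t*0)"
  have "?h 0 < ?h T"
  proof (rule incr_lemma[OF Tp phi_line_cont])
    fix t assume t: "0 < t" "t < T"
    have xi: "a - t > a/2" using t T1 by simp
    have wt: "1 - (S-1)*(a-t) - b = (S-1)*t" using w unfolding S_def by (simp add: algebra_simps)
    have wtp: "(S-1)*t > 0" using S1 t by simp
    have mt: "R - 1 - (a-t) - b = m + t" unfolding m_def by simp
    have "(?h has_real_derivative pa r s (a + t*(-1)) (b + t*0) * (-1) + pb r s (a + t*(-1)) (b + t*0) * 0) (at t)"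
      by (rule phi_line_deriv) (use t xi b mp wt wtp mt a s in \<open>auto simp: R_def S_def\<close>)
    moreover have "- pa r s (a-t) b > 0"
    proof -
      have "(R-1)*((a-t)+b)*((S-1)*t) \<le> (R-1)*(a+b)*((S-1)*t)"
        using R1 t wtp by (intro mult_right_mono mult_left_mono) auto
      also have "... = K*t" unfolding K_def by simp
      also have "... < K*T" using Kp t by simp
      also have "... \<le> K*(a*m/(4*K))" using Kp T1(3) by (intro mult_left_mono) auto
      also have "... = a*m/4" using Kp by simp
      also have "... < (a/2)*m" using a mp by simp
      also have "... \<le> (a-t)*m" using xi mp by (intro mult_right_mono) auto
      also have "... < (a-t)*(m+t)" using xi t a by simp
      finally have ineq: "(R-1)*((a-t)+b)*((S-1)*t) < (a-t)*(m+t)" .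
      have "pa r s (a-t) b = ln ((R-1)*((a-t)+b)*((S-1)*t)) - ln ((a-t)*(m+t))"
        using pa_eq[of "a-t" b r s] xi a b mp wt wtp mt t r unfolding R_def S_def by simp
      moreover have "ln ((R-1)*((a-t)+b)*((S-1)*t)) < ln ((a-t)*(m+t))"
        using ineq R1 xi a b wtp mp t by (subst ln_less_cancel_iff) auto
      ultimately show ?thesis by simp
    qed
    ultimately show "(?h has_real_derivative - pa r s (a-t) b) (at t) \<and> - pa r s (a-t) b > 0" by simp
  qed
  then have "phi r s (a,b) < phi r s (a-T,b)" by simp
  moreover have "(a-T,b) \<in> phi_dom r s"
  proof -
    have "(S-1)*(a-T) \<le> (S-1)*a" using S1 Tp by simp
    then show ?thesis
      unfolding phi_dom_def Kset_def using Tp a b T1 u w unfolding S_def R_def by auto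
  qed
  moreover have "dist (a-T,b) (a,b) < e" using T1 Tp by (simp add: dist_Pair_Pair)
  ultimately show ?thesis by blast
qed



lemma corner01:
  assumes r: "r \<ge> 2" and s: "s \<ge> 2" and u: "0 \<le> real r*real s - real r - real s - real s*1" and e: "e > 0"
  shows "\<exists>q\<in>phi_dom r s. dist q (0,1) < e \<and> phi r s q > phi r s (0,1)"
proof -
  define S where "S = real s"
  define R where "R = real r"
  define N where "N = R*S - R - S"
  have S1: "S - 1 \<ge> 1" using s S_def by auto
  have uN: "N - S \<ge> 0" using u unfolding N_def R_def S_def by simp
  have r3: "R - 2 \<ge> 1"
  proof (rule ccontr)
    assume "\<not> R - 2 \<ge> 1"
    then have "r = 2" using r unfolding R_def by simp
    then have "N - S = -2" unfolding N_def R_def by simp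
    then show False using uN by simp
  qed
  have Np: "N > 0" using uN S1 by simp
  define L where "L = ln (R - 1)"
  have L0: "L \<ge> 0" unfolding L_def using r3 by simp
  define C0 where "C0 = 2*ln(1/2) - (S-2)*L - ln N"
  define T where "T = min (e/(2*S)) (min (1/(2*(S-1))) (exp C0))"
  have Tp: "T > 0" unfolding T_def using e S1 by auto
  have T1: "T \<le> e/(2*S)" "T \<le> 1/(2*(S-1))" "T \<le> exp C0" unfolding T_def by auto
  have ST: "(S-1)*T \<le> 1/2" using T1(2) S1 by (simp add: field_simps)
  let ?h = "\<lambda>t. phi r s (0 + t*1, 1 + t*(-(S-1)))"
  have "?h 0 < ?h T"
  proof (rule incr_lemma[OF Tp phi_line_cont])
    fix t assume t: "0 < t" "t < T"
    define y where "y = (S-1)*t"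
    define bb where "bb = 1 + t*(-(S-1))"
    have bby: "bb = 1 - y" unfolding bb_def y_def by (simp add: algebra_simps)
    have "(S-1)*t < (S-1)*T" using t S1 by simp
    then have y2: "y < 1/2" using ST unfolding y_def by linarith
    have ty: "t \<le> y" using S1 t unfolding y_def by simp
    have bb2: "bb > 1/2" using y2 bby by linarith
    have ab1: "t + bb \<le> 1" using ty bby by linarith
    have abp: "t + bb > 0" using t bb2 by linarith
    have m: "R - 1 - t - bb \<ge> 1" using ab1 r3 by linarith
    have Sy: "S*y > 0" using S1 t unfolding y_def by simp
    have uu: "N - S*bb = N - S + S*y" unfolding bby by (simp add: algebra_simps)
    have up: "N - S*bb > 0" using uu uN Sy by linarith
    have uleN: "N - S*bb \<le> N" using bb2 S1 by simp
    have c1: "0 + t*1 + bb > 0" using abp by simp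
    have c2: "R - 1 - (0 + t*1) - bb > 0" using m by simp
    have c3: "bb > 0" using bb2 by simp
    have c4: "0 + t*1 > 0" using t by simp
    have c5: "R*S - R - S - S*bb > 0" using up unfolding N_def .
    have c6: "(S-1)*1 + (-(S-1)) = 0" by simp
    note D0 = phi_line_deriv[OF disjI2[OF c1[unfolded bb_def S_def R_def]] disjI2[OF c2[unfolded bb_def S_def R_def]]
       disjI2[OF c3[unfolded bb_def S_def R_def]] disjI2[OF c4] disjI2[OF c5[unfolded bb_def S_def R_def]]
       disjI1[OF c6[unfolded S_def]] s]
    have e1: "pa r s (0 + t*1) bb * 1 + pb r s (0 + t*1) bb * - (S - 1) = pa r s t bb - pb r s t bb * (S-1)" by (simp add: algebra_simps)
    have D: "(?h has_real_derivative pa r s t bb - pb r s t bb * (S-1)) (at t)"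
      using D0[folded S_def R_def, folded bb_def] unfolding e1 .
    define A where "A = ln (R - 1) + ln (t + bb) - ln (R - 1 - t - bb)"
    have Deq: "pa r s t bb - pb r s t bb * (S-1) = (2 - S)*A + 2*ln bb - ln t - ln (N - S*bb)"
      using pb_mul[OF s, of r t bb] unfolding pa_def A_def R_def[symmetric] S_def[symmetric] N_def[symmetric]
      by (simp add: algebra_simps)
    have AL: "A \<le> L"
    proof -
      have "ln (t + bb) \<le> 0" using ab1 abp by simp
      moreover have "ln (R - 1 - t - bb) \<ge> 0" using m by simp
      ultimately show ?thesis unfolding A_def L_def by linarith
    qed
    have "(2 - S)*A \<ge> (2 - S)*L"
    proof -
      have "(S - 2)*(L - A) \<ge> 0" using AL s unfolding S_def by simp
      then show ?thesis by (simp add: algebra_simps)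
    qed
    moreover have "ln bb \<ge> ln (1/2)" using bb2 by simp
    moreover have "ln (N - S*bb) \<le> ln N" using up uleN by simp
    moreover have "ln t < C0" using ln_lt_of_exp[of t C0] t T1(3) by simp
    moreover have "(S-2)*L = -((2-S)*L)" by (simp add: algebra_simps)
    ultimately have "(2 - S)*A + 2*ln bb - ln t - ln (N - S*bb) > 0" unfolding C0_def by linarith
    then show "(?h has_real_derivative pa r s t bb - pb r s t bb * (S-1)) (at t) \<and> pa r s t bb - pb r s t bb * (S-1) > 0"
      using D Deq by simp
  qed
  then have less: "phi r s (0,1) < phi r s (0 + T*1, 1 + T*(-(S-1)))" by simp
  moreover have "(0 + T*1, 1 + T*(-(S-1))) \<in> phi_dom r s"
  proof -
    have b1: "1 + T*(-(S-1)) \<ge> 1/2" using ST by (simp add: algebra_simps)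
    have "T*(S-1) \<ge> 0" using Tp S1 by simp
    then have b2: "1 + T*(-(S-1)) \<le> 1" using mult_minus_right[of T "S-1"] by linarith
    have "S*(1 + T*(-(S-1))) \<le> S*1" by (rule mult_left_mono[OF b2]) (use S1 in simp)
    then have "0 \<le> N - S*(1 + T*(-(S-1)))" using uN by linarith
    then show ?thesis unfolding phi_dom_def Kset_def using Tp b1 unfolding N_def R_def S_def
      by (auto simp: algebra_simps)
  qed
  moreover have "dist (0 + T*1, 1 + T*(-(S-1))) (0,1) < e"
  proof -
    have "dist (0 + T*1, 1 + T*(-(S-1))) (0,1) \<le> \<bar>T\<bar>*(\<bar>1\<bar> + \<bar>-(S-1)\<bar>)" by (rule dist_line)
    also have "... = T*S" using Tp S1 by simp
    also have "... \<le> e/2" using T1(1) S1 by (simp add: field_simps)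
    finally show ?thesis using e by simp
  qed
  ultimately show ?thesis by blast
qed

lemma corner_a0:
  assumes r: "r \<ge> 2" and s: "s \<ge> 2" and N: "real r*real s - real r - real s > 0"
    and nt: "\<not> (r = 2 \<and> s = 2)" and e: "e > 0"
  shows "\<exists>q\<in>phi_dom r s. dist q (1/(real s - 1),0) < e \<and> phi r s q > phi r s (1/(real s - 1),0)"
proof -
  define S where "S = real s"
  define R where "R = real r"
  define N where "N = R*S - R - S"
  define a0 where "a0 = 1/(S-1)"
  have S1: "S - 1 \<ge> 1" using s S_def by auto
  have Np: "N > 0" using N unfolding N_def R_def S_def .
  have a0p: "a0 > 0" "a0 \<le> 1" "(S-1)*a0 = 1" unfolding a0_def using S1 by auto
  define C0 where "C0 = ((S-1)*ln(a0/2) + ln(N/2))/2"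
  define T where "T = min (e/4) (min (1/2) (min (N/(2*S)) (exp C0)))"
  have Tp: "T > 0" unfolding T_def using e S1 Np by auto
  have T1: "T \<le> e/4" "T \<le> 1/2" "T \<le> N/(2*S)" "T \<le> exp C0" unfolding T_def by auto
  have ST: "S*T \<le> N/2" using T1(3) S1 by (simp add: field_simps)
  let ?h = "\<lambda>t. phi r s (a0 + t*(-a0), 0 + t*1)"
  have "?h 0 < ?h T"
  proof (rule incr_lemma[OF Tp phi_line_cont])
    fix t assume t: "0 < t" "t < T"
    define a where "a = a0 + t*(-a0)"
    have a_eq: "a = a0*(1-t)" unfolding a_def by (simp add: algebra_simps)
    have a2: "a \<ge> a0/2"
    proof -
      have "a0*(1/2) \<le> a0*(1-t)" using a0p t T1(2) by (intro mult_left_mono) auto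
      then show ?thesis unfolding a_eq by simp
    qed
    have ap: "a > 0" using a2 a0p by simp
    have "(S-1)*(a0*(1-t)) = ((S-1)*a0)*(1-t)" by (simp only: mult.assoc)
    then have "(S-1)*a = 1 - t" unfolding a_eq using a0p(3) by simp
    then have w: "1 - (S-1)*a - t = 0" by simp
    have m_eq: "R - 1 - a - t = (R - 2) + (S - 2)*a" using w by (simp add: algebra_simps)
    have mp: "R - 1 - a - t > 0"
    proof (cases "r \<ge> 3")
      case True
      then have "R - 2 \<ge> 1" unfolding R_def by simp
      moreover have "(S-2)*a \<ge> 0" using s ap unfolding S_def by simp
      ultimately show ?thesis using m_eq by linarith
    next
      case False
      then have "r = 2" using r by simp
      then have "s \<ge> 3" using nt s by simp
      then have "(S-2)*a > 0" using ap unfolding S_def by simp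
      moreover have "R - 2 = 0" using \<open>r = 2\<close> unfolding R_def by simp
      ultimately show ?thesis using m_eq by linarith
    qed
    have "S*t < S*T" using t S1 by simp
    then have u: "N - S*t > N/2" using ST by linarith
    have c1: "a + (0 + t*1) > 0" using ap t by simp
    have c2: "R - 1 - a - (0 + t*1) > 0" using mp by simp
    have c3: "0 + t*1 > 0" using t by simp
    have c4: "a > 0" using ap .
    have c5: "R*S - R - S - S*(0 + t*1) > 0" using u Np unfolding N_def by simp
    have c6: "(S-1)*(-a0) + 1 = 0" using a0p(3) by simp
    note D0 = phi_line_deriv[OF disjI2[OF c1[unfolded a_def S_def R_def]] disjI2[OF c2[unfolded a_def S_def R_def]]
       disjI2[OF c3] disjI2[OF c4[unfolded a_def]] disjI2[OF c5[unfolded S_def R_def]]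
       disjI1[OF c6[unfolded S_def]] s]
    have e1: "pa r s a (0 + t*1) * - a0 + pb r s a (0 + t*1) * 1 = pb r s a t - pa r s a t * a0" by simp
    have D: "(?h has_real_derivative pb r s a t - pa r s a t * a0) (at t)"
      using D0[folded S_def R_def, folded a_def] unfolding e1 .
    define A where "A = ln (R - 1) + ln (a + t) - ln (R - 1 - a - t)"
    have Deq: "(pb r s a t - pa r s a t * a0)*(S-1) = (S - 2)*A + ln a + ln (N - S*t) - 2*ln t"
    proof -
      have "(pb r s a t - pa r s a t * a0)*(S-1) = pb r s a t * (S-1) - pa r s a t * ((S-1)*a0)"
        by (simp add: algebra_simps)
      also have "... = pb r s a t * (S-1) - pa r s a t" using a0p(3) by simp
      finally have "(pb r s a t - pa r s a t * a0)*(S-1) = pb r s a t * (S-1) - pa r s a t" .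
      then show ?thesis
        using pb_mul[OF s, of r a t] unfolding pa_def A_def R_def[symmetric] S_def[symmetric] N_def[symmetric]
        by (simp add: algebra_simps)
    qed
    have A: "A \<ge> ln a" using A_ge[of a t r] ap t mp unfolding A_def R_def by simp
    have "(S - 2)*A \<ge> (S-2)*ln a" using A s unfolding S_def by (intro mult_left_mono) auto
    moreover have "(S-1)*ln a \<ge> (S-1)*ln (a0/2)" using a2 a0p S1 by (intro mult_left_mono) auto
    moreover have "ln (N - S*t) > ln (N/2)" using u Np by simp
    moreover have "ln t < C0" using ln_lt_of_exp[of t C0] t T1(4) by simp
    ultimately have "(S - 2)*A + ln a + ln (N - S*t) - 2*ln t > 0" unfolding C0_def by (simp add: algebra_simps)
    then have "(pb r s a t - pa r s a t * a0)*(S-1) > 0" using Deq by simp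
    then have "pb r s a t - pa r s a t * a0 > 0" using S1 by (simp add: zero_less_mult_iff)
    then show "(?h has_real_derivative pb r s a t - pa r s a t * a0) (at t) \<and> pb r s a t - pa r s a t * a0 > 0"
      using D by simp
  qed
  then have less: "phi r s (a0,0) < phi r s (a0 + T*(-a0), 0 + T*1)" by simp
  moreover have "(a0 + T*(-a0), 0 + T*1) \<in> phi_dom r s"
  proof -
    have a1: "a0 + T*(-a0) \<ge> 0" using a0p T1(2) by (simp add: algebra_simps)
    have w1: "(S-1)*(a0 + T*(-a0)) + T = 1" using a0p(3) by (simp add: algebra_simps)
    have h3: "N = real r * real s - real r - real s" by (simp add: N_def R_def S_def)
    have h4: "0 \<le> real r * real s - real r - real s - real s * T" using ST h3 Np unfolding S_def by linarith
    show ?thesis unfolding phi_dom_def Kset_def using Tp a1 w1 h4 unfolding S_def by auto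
  qed
  moreover have "dist (a0 + T*(-a0), 0 + T*1) (a0,0) < e"
  proof -
    have "dist (a0 + T*(-a0), 0 + T*1) (a0,0) \<le> \<bar>T\<bar>*(\<bar>-a0\<bar> + \<bar>1\<bar>)" by (rule dist_line)
    also have "... \<le> T*2" using Tp a0p by simp
    also have "... < e" using T1(1) e by simp
    finally show ?thesis .
  qed
  ultimately have "\<exists>q\<in>phi_dom r s. dist q (a0,0) < e \<and> phi r s q > phi r s (a0,0)" by blast
  then show ?thesis unfolding a0_def S_def .
qed



lemma N_pos:
  assumes "r \<ge> 2" "s \<ge> 2" "\<not> (r = 2 \<and> s = 2)"
  shows "real r*real s - real r - real s > 0"
proof -
  have e: "real r*real s - real r - real s = (real r - 1)*(real s - 1) - 1" by (simp add: algebra_simps)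
  consider "r \<ge> 3" | "s \<ge> 3" using assms by linarith
  then have "(real r - 1)*(real s - 1) \<ge> 2"
  proof cases
    case 1
    then have "real r - 1 \<ge> 2" "real s - 1 \<ge> 1" using assms by auto
    then show ?thesis using mult_mono[of 2 "real r - 1" 1 "real s - 1"] by simp
  next
    case 2
    then have "real r - 1 \<ge> 1" "real s - 1 \<ge> 2" using assms by auto
    then show ?thesis using mult_mono[of 1 "real r - 1" 2 "real s - 1"] by simp
  qed
  then show ?thesis unfolding e by simp
qed

lemma logs_to_prod:
  assumes r: "r \<ge> 2" and s: "s \<ge> 2" and a: "a > 0" and b: "b > 0"
    and m: "real r - 1 - a - b > 0"
    and u: "real r*real s - real r - real s - real s*b > 0"
    and w: "1 - (real s - 1)*a - b > 0"
    and pa0: "pa r s a b = 0" and pb0: "pb r s a b = 0"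
  shows "(real r - 1)*(a+b)*(1 - (real s - 1)*a - b) = a*(real r - 1 - a - b)"
    "a^(s-1) * (real r*real s - real r - real s - real s*b) = b^2 * (1 - (real s - 1)*a - b)^(s-2)"
proof -
  define U where "U = real r*real s - real r - real s - real s*b"
  define W where "W = 1 - (real s - 1)*a - b"
  define A where "A = ln (real r - 1) + ln (a + b) - ln (real r - 1 - a - b)"
  have R1: "real r - 1 > 0" using r by simp
  have X: "(real r - 1)*(a+b)*W > 0" using R1 a b w W_def by simp
  have Y: "a*(real r - 1 - a - b) > 0" using a m by simp
  have "ln ((real r - 1)*(a+b)*W) - ln (a*(real r - 1 - a - b)) = 0"
    using pa_eq[of a b r s] pa0 a b m w r unfolding W_def by simp
  then have "ln ((real r - 1)*(a+b)*W) = ln (a*(real r - 1 - a - b))" by simp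
  then show "(real r - 1)*(a+b)*(1 - (real s - 1)*a - b) = a*(real r - 1 - a - b)"
    using X Y unfolding W_def by simp
  have Aeq: "A = ln a - ln W" using pa0 unfolding pa_def A_def W_def by simp
  have "A*(real s - 1) + (ln U + ln W - 2*ln b) = 0"
    using pb_mul[OF s, of r a b] pb0 unfolding A_def U_def W_def by simp
  then have key: "(real s - 1)*ln a + ln U = 2*ln b + (real s - 2)*ln W"
    unfolding Aeq by (simp add: algebra_simps)
  have s1: "real (s-1) = real s - 1" "real (s-2) = real s - 2" "real (s - Suc 0) = real s - 1" using s by auto
  have "ln (a^(s-1) * U) = (real s - 1)*ln a + ln U"
    using a u U_def by (simp add: ln_mult ln_realpow s1)
  also have "... = 2*ln b + (real s - 2)*ln W" by (rule key)
  also have "... = ln (b^2 * W^(s-2))"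
    using b w W_def by (simp add: ln_mult ln_realpow s1)
  finally have "ln (a^(s-1) * U) = ln (b^2 * W^(s-2))" .
  moreover have "a^(s-1) * U > 0" using a u U_def by simp
  moreover have "b^2 * W^(s-2) > 0" using b w W_def by simp
  ultimately show "a^(s-1) * (real r*real s - real r - real s - real s*b) = b^2 * (1 - (real s - 1)*a - b)^(s-2)"
    unfolding U_def W_def by simp
qed

lemma interior_ball_facts:
  assumes "(a, b) \<in> interior (phi_dom r s)" and s: "s \<ge> 2"
  shows "a > 0" "b > 0" "1 - (real s - 1)*a - b > 0" "real r*real s - real r - real s - real s*b > 0"
proof -
  obtain e where e: "e > 0" "ball (a,b) e \<subseteq> phi_dom r s" using assms mem_interior by blast
  have inb: "\<And>p. dist p (a,b) < e \<Longrightarrow> p \<in> phi_dom r s" using e by (auto simp: dist_commute)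
  have "(a - e/2, b) \<in> phi_dom r s" using e by (intro inb) (simp add: dist_Pair_Pair dist_real_def)
  then show "a > 0" using e unfolding phi_dom_def Kset_def by auto
  have "(a, b - e/2) \<in> phi_dom r s" using e by (intro inb) (simp add: dist_Pair_Pair dist_real_def)
  then show "b > 0" using e unfolding phi_dom_def Kset_def by auto
  have "(a + e/2, b) \<in> phi_dom r s" using e by (intro inb) (simp add: dist_Pair_Pair dist_real_def)
  then have "(real s - 1)*(a + e/2) + b \<le> 1" unfolding phi_dom_def Kset_def by auto
  moreover have "(real s - 1)*(e/2) > 0" using s e by simp
  moreover have "(real s - 1)*(a + e/2) = (real s - 1)*a + (real s - 1)*(e/2)" by (simp only: distrib_left)
  ultimately show "1 - (real s - 1)*a - b > 0" by linarith
  have "(a, b + e/2) \<in> phi_dom r s" using e by (intro inb) (simp add: dist_Pair_Pair dist_real_def)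
  then have "0 \<le> real r*real s - real r - real s - real s*(b + e/2)" unfolding phi_dom_def by auto
  moreover have "real s*(e/2) > 0" using s e by simp
  ultimately show "real r*real s - real r - real s - real s*b > 0" by (simp add: algebra_simps)
qed

lemma partB:
  assumes r: "r \<ge> 2" and s: "s \<ge> 2" and nt: "\<not> (r = 2 \<and> s = 2)"
    and int: "(a, b) \<in> interior (phi_dom r s)"
    and der: "(phi r s has_derivative (\<lambda>_. 0)) (at (a, b))"
  shows "\<exists>x > -1. a = alpha_x r s x \<and> b = beta_x r s x \<and> star_eq r s x"
proof -
  note f = interior_ball_facts[OF int s]
  have N: "real r*real s - real r - real s > 0" using N_pos[OF r s nt] .
  have s1: "real s - 1 \<ge> 1" using s by simp
  have "a \<le> (real s - 1)*a" using f(1) s1 by simp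
  then have m: "real r - 1 - a - b > 0" using f(3) r by linarith
  have zero: "(*) (0::real) = (\<lambda>_. 0)" by auto
  have pd: "(phi r s has_derivative (\<lambda>_. 0)) (at (a + 0, b + 0))" using der by simp
  have fa: "((\<lambda>y. (a + y, b + 0)) has_derivative (\<lambda>h. (h, 0))) (at 0)"
    by (intro has_derivative_Pair) (auto intro!: derivative_eq_intros)
  have fb: "((\<lambda>y. (a + 0, b + y)) has_derivative (\<lambda>h. (0, h))) (at 0)"
    by (intro has_derivative_Pair) (auto intro!: derivative_eq_intros)
  have da0: "((\<lambda>y. phi r s (a + y, b + 0)) has_real_derivative 0) (at 0)"
    using has_derivative_compose[OF fa pd] unfolding has_field_derivative_def zero by simp
  have db0: "((\<lambda>y. phi r s (a + 0, b + y)) has_real_derivative 0) (at 0)"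
    using has_derivative_compose[OF fb pd] unfolding has_field_derivative_def zero by simp
  have da1: "((\<lambda>y. phi r s (a + y, b + 0)) has_real_derivative pa r s (a+0) (b+0) * 1 + pb r s (a+0) (b+0) * 0) (at 0)"
    by (rule phi_curve_deriv[where A="\<lambda>y. a + y" and B="\<lambda>y. b + 0"])
       (use f m s in \<open>auto intro!: derivative_eq_intros\<close>)
  have db1: "((\<lambda>y. phi r s (a + 0, b + y)) has_real_derivative pa r s (a+0) (b+0) * 0 + pb r s (a+0) (b+0) * 1) (at 0)"
    by (rule phi_curve_deriv[where A="\<lambda>y. a + 0" and B="\<lambda>y. b + y"])
       (use f m s in \<open>auto intro!: derivative_eq_intros\<close>)
  have pa0: "pa r s a b = 0" using DERIV_unique[OF da0 da1] by simp
  have pb0: "pb r s a b = 0" using DERIV_unique[OF db0 db1] by simp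
  note lp = logs_to_prod[OF r s f(1) f(2) m f(4) f(3) pa0 pb0]
  define x where "x = (real r*real s - real r - real s)*a/b - 1"
  note pr = param_from_eq1[OF r s N f(1) f(2) lp(1), folded x_def]
  have "star_eq r s x"
    by (rule star_from_prod[OF r s N pr(1)]) (use lp(2) pr(2,3) in simp)
  then show ?thesis using pr by blast
qed



lemma partA:
  assumes r: "r \<ge> 2" and s: "s \<ge> 2" and nt: "\<not> (r = 2 \<and> s = 2)"
    and p: "p \<in> phi_dom r s"
    and lm: "\<exists>e > 0. \<forall>q \<in> phi_dom r s. dist q p < e \<longrightarrow> phi r s q \<le> phi r s p"
  shows "p = (0, 0) \<or> p \<in> interior (Kset s)"
proof (rule ccontr)
  assume neg: "\<not> (p = (0, 0) \<or> p \<in> interior (Kset s))"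
  obtain a b where pab: "p = (a, b)" by (cases p)
  obtain e where e: "e > 0" "\<forall>q \<in> phi_dom r s. dist q (a,b) < e \<longrightarrow> phi r s q \<le> phi r s (a,b)"
    using lm pab by blast
  have contra: "\<And>q. q \<in> phi_dom r s \<Longrightarrow> dist q (a,b) < e \<Longrightarrow> phi r s q > phi r s (a,b) \<Longrightarrow> False"
    using e(2) by fastforce
  have pd: "a \<ge> 0" "b \<ge> 0" "(real s - 1)*a + b \<le> 1" "0 \<le> real r*real s - real r - real s - real s*b"
    using p unfolding pab phi_dom_def Kset_def by auto
  have N: "real r*real s - real r - real s > 0" using N_pos[OF r s nt] .
  have s1: "real s - 1 \<ge> 1" using s by simp
  have notint: "\<not> (a > 0 \<and> b > 0 \<and> (real s - 1)*a + b < 1)"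
  proof
    assume h: "a > 0 \<and> b > 0 \<and> (real s - 1)*a + b < 1"
    define Op where "Op = {q::real\<times>real. 0 < fst q \<and> 0 < snd q \<and> (real s - 1)*fst q + snd q < 1}"
    have "open Op" unfolding Op_def
      by (intro open_Collect_conj open_Collect_less continuous_intros)
    moreover have "Op \<subseteq> Kset s" unfolding Op_def Kset_def by auto
    ultimately have "Op \<subseteq> interior (Kset s)" by (simp add: interior_maximal)
    moreover have "(a,b) \<in> Op" unfolding Op_def using h by simp
    ultimately show False using neg pab by blast
  qed
  show False
  proof (cases "a = 0")
    case a0: True
    have b1: "b \<le> 1" using pd(3) a0 by simp
    show False
    proof (cases "b = 0")
      case True then show False using neg pab a0 by simp
    next
      case bn0: False
      show False
      proof (cases "b = 1")
        case True
        then obtain q where "q \<in> phi_dom r s" "dist q (0,1) < e" "phi r s q > phi r s (0,1)"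
          using corner01[OF r s _ e(1)] pd(4) by auto
        then show False using contra a0 True by blast
      next
        case False
        then have "0 < b" "b < 1" using bn0 b1 pd(2) by auto
        then obtain q where "q \<in> phi_dom r s" "dist q (0,b) < e" "phi r s q > phi r s (0,b)"
          using case_a0[OF r s _ _ pd(4) e(1)] by blast
        then show False using contra a0 by blast
      qed
    qed
  next
    case an0: False
    then have ap: "a > 0" using pd(1) by simp
    show False
    proof (cases "b = 0")
      case b0: True
      show False
      proof (cases "1 - (real s - 1)*a > 0")
        case True
        then obtain q where "q \<in> phi_dom r s" "dist q (a,0) < e" "phi r s q > phi r s (a,0)"
          using case_b0[OF r s ap _ N e(1)] by blast
        then show False using contra b0 by blast
      next
        case False
        then have "(real s - 1)*a = 1" using pd(3) b0 by simp
        then have aeq: "a = 1/(real s - 1)" using s1 by (simp add: field_simps)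
        obtain q where "q \<in> phi_dom r s" "dist q (1/(real s - 1),0) < e" "phi r s q > phi r s (1/(real s - 1),0)"
          using corner_a0[OF r s N nt e(1)] by blast
        then show False using contra b0 aeq by blast
      qed
    next
      case False
      then have bp: "b > 0" using pd(2) by simp
      then have "1 - (real s - 1)*a - b = 0" using notint ap pd(3) by simp
      then obtain q where "q \<in> phi_dom r s" "dist q (a,b) < e" "phi r s q > phi r s (a,b)"
        using case_w0[OF r s ap bp _ pd(4) nt e(1)] by blast
      then show False using contra by blast
    qed
  qed
qed

lemma quad_diff:
  fixes c x y :: real assumes "c \<noteq> 0"
  shows "x*(x+1)/c - y*(y+1)/c = (x - y)*((x + y + 1)/c)"
  using assms by (simp add: field_simps)

lemma quad_deriv:
  fixes c x :: real assumes "c \<noteq> 0"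
  shows "((\<lambda>y. y*(y+1)/c) has_real_derivative (2*x+1)/c) (at x)"
  using assms by (auto intro!: derivative_eq_intros simp: field_simps)

lemma den_diff:
  assumes r: "r \<ge> 2"
  shows "den_x r s x - den_x r s y = (x - y)*(real s + (x + y + 1)/(real r - 1))"
proof -
  have r0: "real r - 1 \<noteq> 0" using r by simp
  show ?thesis unfolding den_x_def using quad_diff[OF r0, of x y] by (simp add: algebra_simps)
qed

lemma partC:
  assumes r: "r \<ge> 2" and s: "s \<ge> 2" and nt: "\<not> (r = 2 \<and> s = 2)"
    and int: "x \<in> interior (f_dom r s)"
    and der: "((\<lambda>y. phi r s (alpha_x r s y, beta_x r s y)) has_real_derivative 0) (at x)"
  shows "star_eq r s x"
proof -
  have N: "real r*real s - real r - real s > 0" using N_pos[OF r s nt] .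
  have R1: "real r - 1 \<ge> 1" using r by simp
  obtain e where e: "e > 0" "ball x e \<subseteq> f_dom r s" using int mem_interior by blast
  have xf: "x \<in> f_dom r s" using e by auto
  then have x1: "x > -1" unfolding f_dom_def by simp
  define y where "y = x - e/2"
  have yf: "y \<in> f_dom r s" using e unfolding y_def by (intro subsetD[OF e(2)]) (simp add: dist_real_def)
  then have y1: "y > -1" and ydom: "(alpha_x r s y, beta_x r s y) \<in> phi_dom r s" unfolding f_dom_def by auto
  note cy = curve_props[OF r s N y1]
  have "0 \<le> beta_x r s y * (den_x r s y - real s)"
    using ydom cy(5) unfolding phi_dom_def by simp
  then have Dy: "den_x r s y \<ge> real s" using cy(2) by (simp add: zero_le_mult_iff)
  have "(x + y + 1)/(real r - 1) > -1" using x1 y1 R1 by (simp add: field_simps)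
  then have pos1: "real s + (x + y + 1)/(real r - 1) > 0" using s by linarith
  have "den_x r s x - den_x r s y > 0" unfolding den_diff[OF r] using pos1 e unfolding y_def by simp
  then have Dx: "den_x r s x - real s > 0" using Dy by linarith
  note cx = curve_props[OF r s N x1]
  have ux: "real r*real s - real r - real s - real s * beta_x r s x > 0" unfolding cx(5) using cx(2) Dx by simp
  have Dxp: "den_x r s x > 0" using den_pos[OF r s N x1] .
  define D' where "D' = real s + (2*x + 1)/(real r - 1)"
  have D'p: "D' > 0"
  proof -
    have "(2*x + 1)/(real r - 1) > -1" using x1 R1 by (simp add: field_simps)
    then show ?thesis unfolding D'_def using s by linarith
  qed
  have dD: "(den_x r s has_real_derivative D') (at x)"
  proof -
    have r0: "real r - 1 \<noteq> 0" using R1 by simp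
    have "((\<lambda>y. real r * real s - real r + real s * y + y * (y + 1) / (real r - 1)) has_real_derivative
        0 + real s * 1 + (2*x+1)/(real r - 1)) (at x)"
      by (intro DERIV_add DERIV_const DERIV_cmult DERIV_ident quad_deriv r0)
    then have "((\<lambda>y. real r * real s - real r + real s * y + y * (y + 1) / (real r - 1)) has_real_derivative D') (at x)"
      unfolding D'_def by simp
    moreover have "den_x r s = (\<lambda>y. real r * real s - real r + real s * y + y * (y + 1) / (real r - 1))"
      unfolding den_x_def by (rule ext) simp
    ultimately show ?thesis by simp
  qed
  have aeq: "alpha_x r s = (\<lambda>y. (1 + y) / den_x r s y)" unfolding alpha_x_def by (rule ext) simp
  have beq: "beta_x r s = (\<lambda>y. (real r * real s - real r - real s) / den_x r s y)" unfolding beta_x_def by (rule ext) simp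
  have dA: "(alpha_x r s has_real_derivative ((0+1) * den_x r s x - (1 + x) * D') / (den_x r s x * den_x r s x)) (at x)"
    unfolding aeq by (rule DERIV_divide[OF _ dD]) (use Dxp in \<open>auto intro!: derivative_eq_intros\<close>)
  define B' where "B' = (0 * den_x r s x - (real r * real s - real r - real s) * D') / (den_x r s x * den_x r s x)"
  have dB: "(beta_x r s has_real_derivative B') (at x)"
    unfolding beq B'_def by (rule DERIV_divide[OF _ dD]) (use Dxp in \<open>auto intro!: derivative_eq_intros\<close>)
  have B'n: "B' \<noteq> 0" unfolding B'_def using N D'p Dxp by simp
  note fd = phi_curve_deriv[OF dA dB cx(1) cx(2) cx(7) ux cx(4) s]
  have sum0: "pa r s (alpha_x r s x) (beta_x r s x) * (((0+1) * den_x r s x - (1 + x) * D') / (den_x r s x * den_x r s x))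
     + pb r s (alpha_x r s x) (beta_x r s x) * B' = 0"
    using DERIV_unique[OF fd der] .
  have pa0: "pa r s (alpha_x r s x) (beta_x r s x) = 0"
  proof -
    have X: "(real r - 1)*(alpha_x r s x + beta_x r s x)*(1 - (real s - 1)*alpha_x r s x - beta_x r s x) > 0"
      using R1 cx(1,2,4) by simp
    have "pa r s (alpha_x r s x) (beta_x r s x) =
      ln ((real r - 1)*(alpha_x r s x + beta_x r s x)*(1 - (real s - 1)*alpha_x r s x - beta_x r s x))
      - ln (alpha_x r s x*(real r - 1 - alpha_x r s x - beta_x r s x))"
      using pa_eq[of "alpha_x r s x" "beta_x r s x" r s] cx(1,2,4,7) r by simp
    then show ?thesis unfolding cx(6) by simp
  qed
  have pb0: "pb r s (alpha_x r s x) (beta_x r s x) = 0" using sum0 B'n unfolding pa0 by simp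
  note lp = logs_to_prod[OF r s cx(1) cx(2) cx(7) ux cx(4) pa0 pb0]
  show ?thesis by (rule star_from_prod[OF r s N x1 lp(2)])
qed

theorem lemmaA1:
  fixes r s :: nat
  assumes "r \<ge> 2" and "s \<ge> 2"
    and "(s \<ge> 5 \<and> real r > rho s) \<or> (s \<in> {2, 3, 4} \<and> (r, s) \<noteq> (2, 2))"
  shows "(\<forall>p \<in> phi_dom r s.
           (\<exists>e > 0. \<forall>q \<in> phi_dom r s. dist q p < e \<longrightarrow> phi r s q \<le> phi r s p)
           \<longrightarrow> p = (0, 0) \<or> p \<in> interior (Kset s))
    \<and> (\<forall>a b. (a, b) \<in> interior (Kset s) \<and> (a, b) \<in> interior (phi_dom r s)
           \<and> (phi r s has_derivative (\<lambda>_. 0)) (at (a, b))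
           \<longrightarrow> (\<exists>x > -1. a = alpha_x r s x \<and> b = beta_x r s x \<and> star_eq r s x))
    \<and> (\<forall>x. x \<in> interior (f_dom r s)
           \<and> ((\<lambda>y. phi r s (alpha_x r s y, beta_x r s y)) has_real_derivative 0) (at x)
           \<longrightarrow> star_eq r s x)"
proof -
  have nt: "\<not> (r = 2 \<and> s = 2)" using assms(3) by auto
  note A = partA[OF assms(1,2) nt]
  note B = partB[OF assms(1,2) nt]
  note C = partC[OF assms(1,2) nt]
  show ?thesis
  proof (intro conjI)
    show "\<forall>p \<in> phi_dom r s.
           (\<exists>e > 0. \<forall>q \<in> phi_dom r s. dist q p < e \<longrightarrow> phi r s q \<le> phi r s p)
           \<longrightarrow> p = (0, 0) \<or> p \<in> interior (Kset s)" using A by blast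
    show "\<forall>a b. (a, b) \<in> interior (Kset s) \<and> (a, b) \<in> interior (phi_dom r s)
           \<and> (phi r s has_derivative (\<lambda>_. 0)) (at (a, b))
           \<longrightarrow> (\<exists>x > -1. a = alpha_x r s x \<and> b = beta_x r s x \<and> star_eq r s x)" using B by blast
    show "\<forall>x. x \<in> interior (f_dom r s)
           \<and> ((\<lambda>y. phi r s (alpha_x r s y, beta_x r s y)) has_real_derivative 0) (at x)
           \<longrightarrow> star_eq r s x" using C by blast
  qed
qed

end
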